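(* Let $S_{\mathbf{A}}$ be a finite set of generalized side informations $\mathbf{A}\in\mathcal{C}(\mathbf{X})$. For every $\epsilon>0$, $R_{lb}(\mathbf{D}+\epsilon\mathbf{1})\ge R'_{lb}(\mathbf{D}+\epsilon\mathbf{1})$, where $R'_{lb}(\mathbf{D}+\epsilon\mathbf{1})$ is the infimum of $K(\emptyset)-\epsilon$ over all $K:S_{\mathbf{A}}\to[0,\infty)$ satisfying, for all elements of $S_{\mathbf{A}}$ involved: (initialize) $K(\mathbf{X})=0$; (non-negativity) $K(\mathbf{A})\ge0$; (monotonicity) $K((\mathbf{A},\mathbf{C}))\ge K((\mathbf{B},\mathbf{C}))$ whenever $(\mathbf{B}\succeq\mathbf{A}|\mathbf{C})$; (monotonicity+) $K(\mathbf{A})\ge K(\mathbf{B})+R(\mathbf{D_A}+\epsilon\mathbf{1})$ whenever $\mathbf{A}\leftrightarrow\mathbf{B}\leftrightarrow\mathbf{X}$; (submodularity) $K(\mathbf{A})+K(\mathbf{B})\ge K(\mathbf{C})+K((\mathbf{A},\mathbf{B}))$ for all couplings with $\mathbf{B}\leftrightarrow\mathbf{C}\leftrightarrow\mathbf{A}$ and $\mathbf{C}=f_1(\mathbf{A})$ or $\mathbf{C}=f_2(\mathbf{B})$ for deterministic $f_1,f_2$. Here, for a pair with $\mathbf{A}\leftrightarrow\mathbf{B}\leftrightarrow\mathbf{X}$, $\mathbf{D_A}=\{\mathbf{D_i}:\mathbf{Y_i}\leftrightarrow\mathbf{A}\leftrightarrow\mathbf{X}\}$ and $R(\mathbf{D_A}+\epsilon\mathbf{1})=\min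 I(\mathbf{B};\mathbf{V}|\mathbf{A})$, the minimum over random vectors $\mathbf{V}$ jointly distributed with $(\mathbf{X},\mathbf{A},\mathbf{B},\mathbf{Y_1},\dots,\mathbf{Y_m})$ with $\mathbf{V}\leftrightarrow\mathbf{X}\leftrightarrow(\mathbf{A},\mathbf{B},\mathbf{Y_1},\dots,\mathbf{Y_m})$ for which there exist functions $g_i$ with $E[d_i(\mathbf{X},g_i(\mathbf{V},\mathbf{Y_i}))]\le\mathbf{D_i}+\epsilon\mathbf{1}$ for every $i$ with $\mathbf{D_i}\in\mathbf{D_A}$.
   Context: Setting as for the LP lower bound: source $\mathbf{X}$, side informations $\mathbf{Y_i}$, distortion measures $d_i$ and constraints $\mathbf{D_i}$. $\mathcal{C}(\mathbf{X})$ is the set of random vectors coupled to $\mathbf{X}$ (joint distributions whose first component has the law of $\mathbf{X}$), called generalized side information. $(\mathbf{B}\succeq\mathbf{A}|\mathbf{C})$ means $I(\mathbf{W};\mathbf{B}|\mathbf{C})\ge I(\mathbf{W};\mathbf{A}|\mathbf{C})$ for all $\mathbf{W}$ with $\mathbf{W}\leftrightarrow(\mathbf{X},\mathbf{C})\leftrightarrow(\mathbf{A},\mathbf{B})$. $K(\emptyset)$ denotes the common value of $K$ at deterministic random vectors. $R_{lb}(\mathbf{D}+\epsilon\mathbf{1})=\inf_{\mathbf{V}\in\mathcal{C}(\mathbf{X})}\inf_{\mathbf{U}_\cdot}R^{LP}_{lb}(\epsilon)$, where $\mathbf{U}_\cdot$ assigns to each $\mathbf{A}\in\mathcal{C}(\mathbf{X})$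 a random vector $\mathbf{U_A}$ jointly distributed with $(\mathbf{X},\mathbf{V})$ such that: (1) $\mathbf{U_B}$ is independent of $\mathbf{X}$; (2) if $\mathbf{X}\leftrightarrow\mathbf{B}\leftrightarrow(A_1,\dots,A_s)$ is possible then $\mathbf{U_B},(U_{A_1},\dots,U_{A_s})$ can be coupled with $(\mathbf{X},\mathbf{V})$ so that $\mathbf{X}\leftrightarrow(\mathbf{V},\mathbf{U_B})\leftrightarrow(U_{A_1},\dots,U_{A_s})$; (3) there are $g_i$ with $E[d_i(\mathbf{X},g_i(\mathbf{V},\mathbf{U_{Y_i}},\mathbf{Y_i}))]\le\mathbf{D_i}+\epsilon\mathbf{1}$. $R^{LP}_{lb}(\epsilon)$ is the infimum of $K(\emptyset)-\epsilon$ over $K:\mathcal{C}(\mathbf{X})\to[0,\infty)$ (constant on deterministic vectors) with: $K(\mathbf{X})=0$; $K(\mathbf{A})\ge0$; $K(\mathbf{B})+I(\mathbf{B};\mathbf{V},\mathbf{U_B}|\mathbf{A})\ge K(\mathbf{A})$ when $\mathbf{A}\leftrightarrow\mathbf{B}\leftrightarrow\mathbf{X}$; $K((\mathbf{A},\mathbf{C}))\ge K((\mathbf{B},\mathbf{C}))$ when $(\mathbf{B}\succeq\mathbf{A}|\mathbf{C})$; $K(\mathbf{A})\ge K(\mathbf{B})+I(\mathbf{B};\mathbf{V},\mathbf{U_A}|\mathbf{A})$ when $\mathbf{A}\leftrightarrow\mathbf{B}\leftrightarrow\mathbf{X}$; $K(\mathbf{A})+K(\mathbf{B})\ge K(\mathbf{C})+K((\mathbf{A},\mathbf{B}))$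 when $\mathbf{B}\leftrightarrow\mathbf{C}\leftrightarrow\mathbf{A}$ and $\mathbf{C}=f_1(\mathbf{A})$ or $\mathbf{C}=f_2(\mathbf{B})$; with $(\mathbf{U_A},\mathbf{V})\leftrightarrow\mathbf{X}\leftrightarrow(\mathbf{A},\mathbf{B})$ whenever these appear together. *)

theory Defs
  imports "HOL-Probability.Probability_Mass_Function" "HOL-Library.Countable"
          "HOL-Library.Nat_Bijection" "HOL-Library.Extended_Real"
begin

text \<open>Random variables are functions on the sample space of a pmf with finite support.\<close>

definition prb :: "'w pmf \<Rightarrow> ('w \<Rightarrow> bool) \<Rightarrow> real" where
  "prb \<omega> E = measure_pmf.prob \<omega> {w. E w}"

definition markov :: "'w pmf \<Rightarrow> ('w \<Rightarrow> 'a) \<Rightarrow> ('w \<Rightarrow> 'b) \<Rightarrow> ('w \<Rightarrow> 'c) \<Rightarrow> bool" where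
  "markov \<omega> A B C \<longleftrightarrow>
     (\<forall>a b c. prb \<omega> (\<lambda>w. A w = a \<and> B w = b \<and> C w = c) * prb \<omega> (\<lambda>w. B w = b)
            = prb \<omega> (\<lambda>w. A w = a \<and> B w = b) * prb \<omega> (\<lambda>w. B w = b \<and> C w = c))"

definition indep_rv :: "'w pmf \<Rightarrow> ('w \<Rightarrow> 'a) \<Rightarrow> ('w \<Rightarrow> 'b) \<Rightarrow> bool" where
  "indep_rv \<omega> A B \<longleftrightarrow>
     (\<forall>a b. prb \<omega> (\<lambda>w. A w = a \<and> B w = b) = prb \<omega> (\<lambda>w. A w = a) * prb \<omega> (\<lambda>w. B w = b))"

definition ent :: "'w pmf \<Rightarrow> ('w \<Rightarrow> 'a) \<Rightarrow> real" where
  "ent \<omega> F = (\<Sum>v\<in>set_pmf (map_pmf F \<omega>). - pmf (map_pmf F \<omega>) v * log 2 (pmf (map_pmf F \<omega>) v))"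

definition cmi :: "'w pmf \<Rightarrow> ('w \<Rightarrow> 'a) \<Rightarrow> ('w \<Rightarrow> 'b) \<Rightarrow> ('w \<Rightarrow> 'c) \<Rightarrow> real" where
  "cmi \<omega> A B C = ent \<omega> (\<lambda>w. (A w, C w)) + ent \<omega> (\<lambda>w. (B w, C w))
                 - ent \<omega> (\<lambda>w. (A w, B w, C w)) - ent \<omega> C"

text \<open>An element of C(X) is the joint law of (X, A), with A taking values in nat
  (a universal countable alphabet; finite support).\<close>
type_synonym 'x gsi = "('x \<times> nat) pmf"

definition inC :: "'x pmf \<Rightarrow> 'x gsi \<Rightarrow> bool" where
  "inC pX P \<longleftrightarrow> map_pmf fst P = pX \<and> finite (set_pmf P)"

definition det_gsi :: "'x pmf \<Rightarrow> 'x gsi \<Rightarrow> bool" where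
  "det_gsi pX P \<longleftrightarrow> (\<exists>c. P = map_pmf (\<lambda>x. (x, c)) pX)"

text \<open>The representative deterministic vector (written \<emptyset> in the paper).\<close>
definition empty_gsi :: "'x pmf \<Rightarrow> 'x gsi" where
  "empty_gsi pX = map_pmf (\<lambda>x. (x, 0)) pX"

definition X_gsi :: "'x::countable pmf \<Rightarrow> 'x gsi" where
  "X_gsi pX = map_pmf (\<lambda>x. (x, to_nat x)) pX"

definition law :: "'w pmf \<Rightarrow> ('w \<Rightarrow> 'x) \<Rightarrow> ('w \<Rightarrow> nat) \<Rightarrow> 'x gsi" where
  "law \<omega> Xv Av = map_pmf (\<lambda>w. (Xv w, Av w)) \<omega>"

definition pairv :: "('w \<Rightarrow> nat) \<Rightarrow> ('w \<Rightarrow> nat) \<Rightarrow> 'w \<Rightarrow> nat" where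
  "pairv A C = (\<lambda>w. prod_encode (A w, C w))"

definition cpl :: "'x pmf \<Rightarrow> nat pmf \<Rightarrow> (nat \<Rightarrow> 'x) \<Rightarrow> bool" where
  "cpl pX \<omega> Xv \<longleftrightarrow> finite (set_pmf \<omega>) \<and> map_pmf Xv \<omega> = pX"

definition ysv :: "nat \<Rightarrow> (nat \<Rightarrow> 'w \<Rightarrow> nat) \<Rightarrow> 'w \<Rightarrow> nat list" where
  "ysv m Yv = (\<lambda>w. map (\<lambda>i. Yv i w) [0..<m])"

definition succeq :: "nat pmf \<Rightarrow> (nat \<Rightarrow> 'x) \<Rightarrow> (nat \<Rightarrow> nat) \<Rightarrow> (nat \<Rightarrow> nat) \<Rightarrow> (nat \<Rightarrow> nat) \<Rightarrow> bool" where
  "succeq \<omega> Xv Bv Av Cv \<longleftrightarrow>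
     (\<forall>(\<omega>'::nat pmf) Xv' Av' Bv' Cv' (Wv::nat \<Rightarrow> nat).
        finite (set_pmf \<omega>') \<and>
        map_pmf (\<lambda>w. (Xv' w, Av' w, Bv' w, Cv' w)) \<omega>' = map_pmf (\<lambda>w. (Xv w, Av w, Bv w, Cv w)) \<omega> \<and>
        markov \<omega>' Wv (\<lambda>w. (Xv' w, Cv' w)) (\<lambda>w. (Av' w, Bv' w))
        \<longrightarrow> cmi \<omega>' Wv Bv' Cv' \<ge> cmi \<omega>' Wv Av' Cv')"

text \<open>The source and side informations are given jointly as random variables X0, Y0 i (i < m)
  on a finitely supported sample space \<omega>0.  The distortion d i is vector valued with
  components d i j, j < nc i, and constraint vector D i.\<close>

definition srcX :: "nat pmf \<Rightarrow> (nat \<Rightarrow> 'x) \<Rightarrow> 'x pmf" where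
  "srcX \<omega>0 X0 = map_pmf X0 \<omega>0"

definition Yg :: "nat pmf \<Rightarrow> (nat \<Rightarrow> 'x) \<Rightarrow> (nat \<Rightarrow> nat \<Rightarrow> nat) \<Rightarrow> nat \<Rightarrow> 'x gsi" where
  "Yg \<omega>0 X0 Y0 i = law \<omega>0 X0 (Y0 i)"

definition dist_ok :: "nat pmf \<Rightarrow> (nat \<Rightarrow> 'x) \<Rightarrow> (nat \<Rightarrow> 'r) \<Rightarrow> (nat \<Rightarrow> 'x \<Rightarrow> 'r \<Rightarrow> real)
                        \<Rightarrow> nat \<Rightarrow> (nat \<Rightarrow> real) \<Rightarrow> real \<Rightarrow> bool" where
  "dist_ok \<omega> Xv Zv di k Di \<epsilon> \<longleftrightarrow>
     (\<forall>j<k. measure_pmf.expectation \<omega> (\<lambda>w. di j (Xv w) (Zv w)) \<le> Di j + \<epsilon>)"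

text \<open>U maps A \<in> C(X) to the joint law of (X, V, U_A).\<close>
definition U_ok :: "nat pmf \<Rightarrow> (nat \<Rightarrow> 'x) \<Rightarrow> (nat \<Rightarrow> nat \<Rightarrow> nat) \<Rightarrow> nat
     \<Rightarrow> (nat \<Rightarrow> nat \<Rightarrow> 'x \<Rightarrow> 'r \<Rightarrow> real) \<Rightarrow> (nat \<Rightarrow> nat) \<Rightarrow> (nat \<Rightarrow> nat \<Rightarrow> real) \<Rightarrow> real
     \<Rightarrow> 'x gsi \<Rightarrow> ('x gsi \<Rightarrow> ('x \<times> nat \<times> nat) pmf) \<Rightarrow> bool" where
  "U_ok \<omega>0 X0 Y0 m d nc D \<epsilon> Vg U \<longleftrightarrow>
     (\<forall>A. inC (srcX \<omega>0 X0) A \<longrightarrow>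
         map_pmf (\<lambda>(x, v, u). (x, v)) (U A) = Vg \<and> finite (set_pmf (U A))) \<and>
     (\<forall>A. inC (srcX \<omega>0 X0) A \<longrightarrow> indep_rv (U A) fst (\<lambda>(x, v, u). u)) \<and>
     (\<forall>B As. inC (srcX \<omega>0 X0) B \<and> list_all (inC (srcX \<omega>0 X0)) As \<and>
        (\<exists>(\<omega>::nat pmf) Xv Bv (Av::nat \<Rightarrow> nat \<Rightarrow> nat). cpl (srcX \<omega>0 X0) \<omega> Xv \<and> law \<omega> Xv Bv = B \<and>
            (\<forall>j<length As. law \<omega> Xv (Av j) = As ! j) \<and>
            markov \<omega> Xv Bv (\<lambda>w. map (\<lambda>j. Av j w) [0..<length As]))
      \<longrightarrow> (\<exists>(\<omega>::nat pmf) Xv (Vv::nat \<Rightarrow> nat) (Ub::nat \<Rightarrow> nat) (Ua::nat \<Rightarrow> nat \<Rightarrow> nat).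
            finite (set_pmf \<omega>) \<and>
            map_pmf (\<lambda>w. (Xv w, Vv w, Ub w)) \<omega> = U B \<and>
            (\<forall>j<length As. map_pmf (\<lambda>w. (Xv w, Vv w, Ua j w)) \<omega> = U (As ! j)) \<and>
            markov \<omega> Xv (\<lambda>w. (Vv w, Ub w)) (\<lambda>w. map (\<lambda>j. Ua j w) [0..<length As]))) \<and>
     (\<forall>i<m. \<exists>(g::nat \<Rightarrow> nat \<Rightarrow> nat \<Rightarrow> 'r) (\<omega>::nat pmf) Xv (Vv::nat \<Rightarrow> nat) (Uv::nat \<Rightarrow> nat) Yv.
          finite (set_pmf \<omega>) \<and>
          map_pmf (\<lambda>w. (Xv w, Vv w, Uv w)) \<omega> = U (Yg \<omega>0 X0 Y0 i) \<and>
          law \<omega> Xv Yv = Yg \<omega>0 X0 Y0 i \<and>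
          markov \<omega> (\<lambda>w. (Vv w, Uv w)) Xv Yv \<and>
          dist_ok \<omega> Xv (\<lambda>w. g (Vv w) (Uv w) (Yv w)) (d i) (nc i) (D i) \<epsilon>)"

definition LP_feasible :: "'x::countable pmf \<Rightarrow> ('x gsi \<Rightarrow> ('x \<times> nat \<times> nat) pmf)
                           \<Rightarrow> ('x gsi \<Rightarrow> real) \<Rightarrow> bool" where
  "LP_feasible pX U K \<longleftrightarrow>
     (\<forall>P Q. inC pX P \<and> inC pX Q \<and> det_gsi pX P \<and> det_gsi pX Q \<longrightarrow> K P = K Q) \<and>
     K (X_gsi pX) = 0 \<and>
     (\<forall>A. inC pX A \<longrightarrow> K A \<ge> 0) \<and>
     (\<forall>\<omega> Xv Av Bv (Vv::nat \<Rightarrow> nat) (Uv::nat \<Rightarrow> nat).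
        cpl pX \<omega> Xv \<and> map_pmf (\<lambda>w. (Xv w, Vv w, Uv w)) \<omega> = U (law \<omega> Xv Bv) \<and>
        markov \<omega> Av Bv Xv \<and> markov \<omega> (\<lambda>w. (Uv w, Vv w)) Xv (\<lambda>w. (Av w, Bv w))
        \<longrightarrow> K (law \<omega> Xv Bv) + cmi \<omega> Bv (\<lambda>w. (Vv w, Uv w)) Av \<ge> K (law \<omega> Xv Av)) \<and>
     (\<forall>\<omega> Xv Av Bv Cv. cpl pX \<omega> Xv \<and> succeq \<omega> Xv Bv Av Cv
        \<longrightarrow> K (law \<omega> Xv (pairv Av Cv)) \<ge> K (law \<omega> Xv (pairv Bv Cv))) \<and>
     (\<forall>\<omega> Xv Av Bv (Vv::nat \<Rightarrow> nat) (Uv::nat \<Rightarrow> nat).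
        cpl pX \<omega> Xv \<and> map_pmf (\<lambda>w. (Xv w, Vv w, Uv w)) \<omega> = U (law \<omega> Xv Av) \<and>
        markov \<omega> Av Bv Xv \<and> markov \<omega> (\<lambda>w. (Uv w, Vv w)) Xv (\<lambda>w. (Av w, Bv w))
        \<longrightarrow> K (law \<omega> Xv Av) \<ge> K (law \<omega> Xv Bv) + cmi \<omega> Bv (\<lambda>w. (Vv w, Uv w)) Av) \<and>
     (\<forall>\<omega> Xv Av Bv Cv. cpl pX \<omega> Xv \<and> markov \<omega> Bv Cv Av \<and>
        ((\<exists>f1. \<forall>w\<in>set_pmf \<omega>. Cv w = f1 (Av w)) \<or> (\<exists>f2. \<forall>w\<in>set_pmf \<omega>. Cv w = f2 (Bv w)))
        \<longrightarrow> K (law \<omega> Xv Av) + K (law \<omega> Xv Bv) \<ge> K (law \<omega> Xv Cv) + K (law \<omega> Xv (pairv Av Bv)))"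

definition R_LP :: "'x::countable pmf \<Rightarrow> real \<Rightarrow> ('x gsi \<Rightarrow> ('x \<times> nat \<times> nat) pmf) \<Rightarrow> ereal" where
  "R_LP pX \<epsilon> U = Inf {ereal (K (empty_gsi pX) - \<epsilon>) | K. LP_feasible pX U K}"

definition R_lb :: "nat pmf \<Rightarrow> (nat \<Rightarrow> 'x::countable) \<Rightarrow> (nat \<Rightarrow> nat \<Rightarrow> nat) \<Rightarrow> nat
     \<Rightarrow> (nat \<Rightarrow> nat \<Rightarrow> 'x \<Rightarrow> 'r \<Rightarrow> real) \<Rightarrow> (nat \<Rightarrow> nat) \<Rightarrow> (nat \<Rightarrow> nat \<Rightarrow> real) \<Rightarrow> real \<Rightarrow> ereal" where
  "R_lb \<omega>0 X0 Y0 m d nc D \<epsilon> =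
     Inf {Inf {R_LP (srcX \<omega>0 X0) \<epsilon> U | U. U_ok \<omega>0 X0 Y0 m d nc D \<epsilon> Vg U}
          | Vg. inC (srcX \<omega>0 X0) Vg}"

definition Rrate :: "nat \<Rightarrow> (nat \<Rightarrow> nat \<Rightarrow> 'x \<Rightarrow> 'r \<Rightarrow> real) \<Rightarrow> (nat \<Rightarrow> nat) \<Rightarrow> (nat \<Rightarrow> nat \<Rightarrow> real)
     \<Rightarrow> real \<Rightarrow> nat pmf \<Rightarrow> (nat \<Rightarrow> 'x) \<Rightarrow> (nat \<Rightarrow> nat) \<Rightarrow> (nat \<Rightarrow> nat) \<Rightarrow> (nat \<Rightarrow> nat \<Rightarrow> nat) \<Rightarrow> ereal" where
  "Rrate m d nc D \<epsilon> \<omega> Xv Av Bv Yv =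
     Inf {ereal (cmi \<omega>' Bv' Vv' Av') | (\<omega>'::nat pmf) Xv' Av' Bv' Yv' (Vv'::nat \<Rightarrow> nat).
            finite (set_pmf \<omega>') \<and>
            map_pmf (\<lambda>w. (Xv' w, Av' w, Bv' w, ysv m Yv' w)) \<omega>'
              = map_pmf (\<lambda>w. (Xv w, Av w, Bv w, ysv m Yv w)) \<omega> \<and>
            markov \<omega>' Vv' Xv' (\<lambda>w. (Av' w, Bv' w, ysv m Yv' w)) \<and>
            (\<forall>i<m. markov \<omega> (Yv i) Av Xv \<longrightarrow>
               (\<exists>g::nat \<Rightarrow> nat \<Rightarrow> 'r. dist_ok \<omega>' Xv' (\<lambda>w. g (Vv' w) (Yv' i w)) (d i) (nc i) (D i) \<epsilon>))}"

definition Rp_feasible :: "nat pmf \<Rightarrow> (nat \<Rightarrow> 'x::countable) \<Rightarrow> (nat \<Rightarrow> nat \<Rightarrow> nat) \<Rightarrow> nat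
     \<Rightarrow> (nat \<Rightarrow> nat \<Rightarrow> 'x \<Rightarrow> 'r \<Rightarrow> real) \<Rightarrow> (nat \<Rightarrow> nat) \<Rightarrow> (nat \<Rightarrow> nat \<Rightarrow> real) \<Rightarrow> real
     \<Rightarrow> 'x gsi set \<Rightarrow> ('x gsi \<Rightarrow> real) \<Rightarrow> bool" where
  "Rp_feasible \<omega>0 X0 Y0 m d nc D \<epsilon> S K \<longleftrightarrow>
     (let pX = srcX \<omega>0 X0 in
     (\<forall>P\<in>S. \<forall>Q\<in>S. det_gsi pX P \<and> det_gsi pX Q \<longrightarrow> K P = K Q) \<and>
     (X_gsi pX \<in> S \<longrightarrow> K (X_gsi pX) = 0) \<and>
     (\<forall>A\<in>S. K A \<ge> 0) \<and>
     (\<forall>\<omega> Xv Av Bv Cv. cpl pX \<omega> Xv \<and> law \<omega> Xv (pairv Av Cv) \<in> S \<and> law \<omega> Xv (pairv Bv Cv) \<in> S \<and>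
        succeq \<omega> Xv Bv Av Cv
        \<longrightarrow> K (law \<omega> Xv (pairv Av Cv)) \<ge> K (law \<omega> Xv (pairv Bv Cv))) \<and>
     (\<forall>\<omega> Xv Av Bv Yv. cpl pX \<omega> Xv \<and> law \<omega> Xv Av \<in> S \<and> law \<omega> Xv Bv \<in> S \<and>
        map_pmf (\<lambda>w. (Xv w, ysv m Yv w)) \<omega> = map_pmf (\<lambda>w. (X0 w, ysv m Y0 w)) \<omega>0 \<and>
        markov \<omega> Av Bv Xv
        \<longrightarrow> ereal (K (law \<omega> Xv Av)) \<ge> ereal (K (law \<omega> Xv Bv)) + Rrate m d nc D \<epsilon> \<omega> Xv Av Bv Yv) \<and>
     (\<forall>\<omega> Xv Av Bv Cv. cpl pX \<omega> Xv \<and> law \<omega> Xv Av \<in> S \<and> law \<omega> Xv Bv \<in> S \<and> law \<omega> Xv Cv \<in> S \<and>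
        law \<omega> Xv (pairv Av Bv) \<in> S \<and> markov \<omega> Bv Cv Av \<and>
        ((\<exists>f1. \<forall>w\<in>set_pmf \<omega>. Cv w = f1 (Av w)) \<or> (\<exists>f2. \<forall>w\<in>set_pmf \<omega>. Cv w = f2 (Bv w)))
        \<longrightarrow> K (law \<omega> Xv Av) + K (law \<omega> Xv Bv) \<ge> K (law \<omega> Xv Cv) + K (law \<omega> Xv (pairv Av Bv))))"

definition Rp_lb :: "nat pmf \<Rightarrow> (nat \<Rightarrow> 'x::countable) \<Rightarrow> (nat \<Rightarrow> nat \<Rightarrow> nat) \<Rightarrow> nat
     \<Rightarrow> (nat \<Rightarrow> nat \<Rightarrow> 'x \<Rightarrow> 'r \<Rightarrow> real) \<Rightarrow> (nat \<Rightarrow> nat) \<Rightarrow> (nat \<Rightarrow> nat \<Rightarrow> real) \<Rightarrow> real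
     \<Rightarrow> 'x gsi set \<Rightarrow> ereal" where
  "Rp_lb \<omega>0 X0 Y0 m d nc D \<epsilon> S =
     Inf {ereal (K (empty_gsi (srcX \<omega>0 X0)) - \<epsilon>) | K. Rp_feasible \<omega>0 X0 Y0 m d nc D \<epsilon> S K}"

end

theory Submission
  imports Defs
begin

lemma pmf_bind_pair:
  "pmf (bind_pmf T (\<lambda>t. map_pmf (Pair t) (K t))) (t0, r) = pmf T t0 * pmf (K t0) r"
proof -
  have "\<And>t. pmf (map_pmf (Pair t) (K t)) (t0, r) = (if t = t0 then pmf (K t0) r else 0)"
  proof -
    fix t show "pmf (map_pmf (Pair t) (K t)) (t0, r) = (if t = t0 then pmf (K t0) r else 0)"
    proof (cases "t = t0")
      case True then show ?thesis by (simp add: pmf_map_inj' inj_on_def)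
    next
      case False then show ?thesis by (auto simp: pmf_eq_0_set_pmf)
    qed
  qed
  then have "pmf (bind_pmf T (\<lambda>t. map_pmf (Pair t) (K t))) (t0, r)
      = (\<integral>t. pmf (K t0) r * indicator {t0} t \<partial>measure_pmf T)"
    unfolding pmf_bind by (intro Bochner_Integration.integral_cong) (auto simp: indicator_def)
  also have "\<dots> = pmf (K t0) r * pmf T t0"
    by (simp add: measure_pmf_single)
  finally show ?thesis by simp
qed

lemma prb_pmf: "prb \<omega> (\<lambda>w. F w = x) = pmf (map_pmf F \<omega>) x"
  by (simp add: prb_def pmf_map vimage_def)

lemma prb_map: "prb (map_pmf h \<omega>) E = prb \<omega> (\<lambda>w. E (h w))"
  by (simp add: prb_def vimage_def)

lemma prb_cong: "(\<And>w. w \<in> set_pmf \<omega> \<Longrightarrow> E w = E' w) \<Longrightarrow> prb \<omega> E = prb \<omega> E'"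
proof -
  assume "\<And>w. w \<in> set_pmf \<omega> \<Longrightarrow> E w = E' w"
  then have "Collect E \<inter> set_pmf \<omega> = Collect E' \<inter> set_pmf \<omega>" by auto
  then show ?thesis unfolding prb_def by (metis measure_Int_set_pmf)
qed

lemma markov_map: "markov (map_pmf h \<omega>) A B C = markov \<omega> (\<lambda>w. A (h w)) (\<lambda>w. B (h w)) (\<lambda>w. C (h w))"
  unfolding markov_def prb_map ..

lemma markov_pmf: "markov \<omega> A B C \<longleftrightarrow>
   (\<forall>a b c. pmf (map_pmf (\<lambda>w. (A w, B w, C w)) \<omega>) (a, b, c) * pmf (map_pmf B \<omega>) b
          = pmf (map_pmf (\<lambda>w. (A w, B w)) \<omega>) (a, b) * pmf (map_pmf (\<lambda>w. (B w, C w)) \<omega>) (b, c))"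
  unfolding markov_def prb_pmf[symmetric] by simp

lemma markov_sym: "markov \<omega> A B C \<Longrightarrow> markov \<omega> C B A"
  unfolding markov_def
proof (intro allI)
  fix a b c
  assume H: "\<forall>a b c. prb \<omega> (\<lambda>w. A w = a \<and> B w = b \<and> C w = c) * prb \<omega> (\<lambda>w. B w = b) =
           prb \<omega> (\<lambda>w. A w = a \<and> B w = b) * prb \<omega> (\<lambda>w. B w = b \<and> C w = c)"
  have e1: "(\<lambda>w. C w = a \<and> B w = b \<and> A w = c) = (\<lambda>w. A w = c \<and> B w = b \<and> C w = a)" by auto
  have e2: "(\<lambda>w. C w = a \<and> B w = b) = (\<lambda>w. B w = b \<and> C w = a)" by auto
  have e3: "(\<lambda>w. B w = b \<and> A w = c) = (\<lambda>w. A w = c \<and> B w = b)" by auto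
  show "prb \<omega> (\<lambda>w. C w = a \<and> B w = b \<and> A w = c) * prb \<omega> (\<lambda>w. B w = b) =
           prb \<omega> (\<lambda>w. C w = a \<and> B w = b) * prb \<omega> (\<lambda>w. B w = b \<and> A w = c)"
    unfolding e1 e2 e3 using H[rule_format, of c b a] by (simp add: mult.commute)
qed

lemma markov_inj_on:
  assumes M: "markov \<omega> A B C" and I: "inj_on \<phi> (C ` set_pmf \<omega>)"
  shows "markov \<omega> A B (\<lambda>w. \<phi> (C w))"
  unfolding markov_def
proof (intro allI)
  fix a b c'
  show "prb \<omega> (\<lambda>w. A w = a \<and> B w = b \<and> \<phi> (C w) = c') * prb \<omega> (\<lambda>w. B w = b) =
        prb \<omega> (\<lambda>w. A w = a \<and> B w = b) * prb \<omega> (\<lambda>w. B w = b \<and> \<phi> (C w) = c')"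
  proof (cases "\<exists>w\<in>set_pmf \<omega>. \<phi> (C w) = c'")
    case True
    then obtain w0 where w0: "w0 \<in> set_pmf \<omega>" "\<phi> (C w0) = c'" by blast
    have ev: "\<And>w. w \<in> set_pmf \<omega> \<Longrightarrow> (\<phi> (C w) = c') = (C w = C w0)"
      using I w0 by (auto dest: inj_onD)
    have "prb \<omega> (\<lambda>w. A w = a \<and> B w = b \<and> \<phi> (C w) = c') = prb \<omega> (\<lambda>w. A w = a \<and> B w = b \<and> C w = C w0)"
      by (rule prb_cong) (simp add: ev)
    moreover have "prb \<omega> (\<lambda>w. B w = b \<and> \<phi> (C w) = c') = prb \<omega> (\<lambda>w. B w = b \<and> C w = C w0)"
      by (rule prb_cong) (simp add: ev)
    ultimately show ?thesis using M unfolding markov_def by simp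
  next
    case False
    have "prb \<omega> (\<lambda>w. A w = a \<and> B w = b \<and> \<phi> (C w) = c') = prb \<omega> (\<lambda>w. False)"
      by (rule prb_cong) (use False in auto)
    moreover have "prb \<omega> (\<lambda>w. B w = b \<and> \<phi> (C w) = c') = prb \<omega> (\<lambda>w. False)"
      by (rule prb_cong) (use False in auto)
    ultimately show ?thesis by (simp add: prb_def)
  qed
qed

lemma markov_pmf2: "markov \<omega> A B C \<longleftrightarrow>
   (\<forall>a b c. pmf (map_pmf (\<lambda>w. ((A w, B w), C w)) \<omega>) ((a, b), c) * pmf (map_pmf B \<omega>) b
          = pmf (map_pmf (\<lambda>w. (A w, B w)) \<omega>) (a, b) * pmf (map_pmf (\<lambda>w. (B w, C w)) \<omega>) (b, c))"
  unfolding markov_def prb_pmf[symmetric] by simp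

lemma map_fst_bind_pair: "map_pmf fst (bind_pmf P (\<lambda>a. map_pmf (Pair a) (K a))) = P"
  by (simp add: map_bind_pmf map_pmf_comp bind_return_pmf' map_pmf_def[symmetric] flip: map_pmf_def)

lemma markov_kernel:
  assumes W: "\<omega>' = bind_pmf P (\<lambda>a. map_pmf (Pair a) (K (f a)))"
  shows "markov \<omega>' (\<lambda>z. H (fst z)) (\<lambda>z. f (fst z)) (\<lambda>z. G (snd z))"
proof -
  let ?HF = "map_pmf (\<lambda>a. (H a, f a)) P"
  have m1: "map_pmf (\<lambda>z. ((H (fst z), f (fst z)), G (snd z))) \<omega>'
     = bind_pmf ?HF (\<lambda>q. map_pmf (Pair q) (map_pmf G (K (snd q))))"
    unfolding W by (simp add: map_bind_pmf bind_map_pmf map_pmf_comp)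
  have m2: "map_pmf (\<lambda>z. f (fst z)) \<omega>' = map_pmf f P"
    using arg_cong[OF map_fst_bind_pair[of P "\<lambda>a. K (f a)"], of "map_pmf f"]
    unfolding W by (simp add: map_pmf_comp)
  have m3: "map_pmf (\<lambda>z. (H (fst z), f (fst z))) \<omega>' = ?HF"
    using arg_cong[OF map_fst_bind_pair[of P "\<lambda>a. K (f a)"], of "map_pmf (\<lambda>a. (H a, f a))"]
    unfolding W by (simp add: map_pmf_comp)
  have m4: "map_pmf (\<lambda>z. (f (fst z), G (snd z))) \<omega>'
     = bind_pmf (map_pmf f P) (\<lambda>y. map_pmf (Pair y) (map_pmf G (K y)))"
    unfolding W by (simp add: map_bind_pmf bind_map_pmf map_pmf_comp)
  show ?thesis
    unfolding markov_pmf2 m1 m2 m3 m4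
    by (simp add: pmf_bind_pair[of _ "\<lambda>q. map_pmf G (K (snd q))", simplified] pmf_bind_pair)
qed

lemma law_det:
  assumes M1: "markov \<omega> A B C" and M2: "markov \<omega>' A' B' C'"
    and E1: "map_pmf (\<lambda>w. (A w, B w)) \<omega> = map_pmf (\<lambda>w. (A' w, B' w)) \<omega>'"
    and E2: "map_pmf (\<lambda>w. (B w, C w)) \<omega> = map_pmf (\<lambda>w. (B' w, C' w)) \<omega>'"
  shows "map_pmf (\<lambda>w. ((A w, B w), C w)) \<omega> = map_pmf (\<lambda>w. ((A' w, B' w), C' w)) \<omega>'"
proof (rule pmf_eqI)
  fix x :: "('b \<times> 'c) \<times> 'd"
  obtain a b c where x: "x = ((a, b), c)" by (metis prod.collapse)
  have EB: "map_pmf B \<omega> = map_pmf B' \<omega>'"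
    using arg_cong[OF E1, of "map_pmf snd"] by (simp add: map_pmf_comp)
  show "pmf (map_pmf (\<lambda>w. ((A w, B w), C w)) \<omega>) x = pmf (map_pmf (\<lambda>w. ((A' w, B' w), C' w)) \<omega>') x"
  proof (cases "pmf (map_pmf B \<omega>) b = 0")
    case True
    then have "b \<notin> set_pmf (map_pmf B \<omega>)" "b \<notin> set_pmf (map_pmf B' \<omega>')"
      using EB by (auto simp only: pmf_eq_0_set_pmf)
    then have "b \<notin> B ` set_pmf \<omega>" "b \<notin> B' ` set_pmf \<omega>'" by auto
    then have "((a, b), c) \<notin> set_pmf (map_pmf (\<lambda>w. ((A w, B w), C w)) \<omega>)"
       "((a, b), c) \<notin> set_pmf (map_pmf (\<lambda>w. ((A' w, B' w), C' w)) \<omega>')" by auto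
    then show ?thesis unfolding x by (simp only: pmf_eq_0_set_pmf[symmetric])
  next
    case False
    have "pmf (map_pmf (\<lambda>w. ((A w, B w), C w)) \<omega>) ((a, b), c) * pmf (map_pmf B \<omega>) b
       = pmf (map_pmf (\<lambda>w. ((A' w, B' w), C' w)) \<omega>') ((a, b), c) * pmf (map_pmf B \<omega>) b"
      using M1 M2 unfolding markov_pmf2 E1 E2 EB by metis
    then show ?thesis unfolding x using False by simp
  qed
qed

lemma ent_expect:
  assumes "finite (set_pmf \<omega>)"
  shows "ent \<omega> F = - measure_pmf.expectation \<omega> (\<lambda>w. log 2 (pmf (map_pmf F \<omega>) (F w)))"
proof -
  have fin: "finite (set_pmf (map_pmf F \<omega>))" using assms by simp
  have "measure_pmf.expectation \<omega> (\<lambda>w. log 2 (pmf (map_pmf F \<omega>) (F w)))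
      = measure_pmf.expectation (map_pmf F \<omega>) (\<lambda>v. log 2 (pmf (map_pmf F \<omega>) v))"
    by simp
  also have "\<dots> = (\<Sum>v\<in>set_pmf (map_pmf F \<omega>). log 2 (pmf (map_pmf F \<omega>) v) * pmf (map_pmf F \<omega>) v)"
    by (rule integral_measure_pmf_real[OF fin]) auto
  finally show ?thesis unfolding ent_def by (simp add: sum_negf[symmetric] mult.commute)
qed

lemma expect_sum:
  assumes "finite (set_pmf \<omega>)"
  shows "measure_pmf.expectation \<omega> f = (\<Sum>w\<in>set_pmf \<omega>. f w * pmf \<omega> w)"
  by (rule integral_measure_pmf_real[OF assms]) auto

lemma pmf_map_pos: "w \<in> set_pmf \<omega> \<Longrightarrow> pmf (map_pmf F \<omega>) (F w) > 0"
  by (metis pmf_positive_iff pmf_map_inj' pmf_eq_0_set_pmf imageI set_map_pmf)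

lemma ent_inj:
  assumes fin: "finite (set_pmf \<omega>)" and I: "inj_on h (F ` set_pmf \<omega>)"
  shows "ent \<omega> (\<lambda>w. h (F w)) = ent \<omega> F"
proof -
  have "\<And>w. w \<in> set_pmf \<omega> \<Longrightarrow> pmf (map_pmf (\<lambda>w. h (F w)) \<omega>) (h (F w)) = pmf (map_pmf F \<omega>) (F w)"
  proof -
    fix w assume w: "w \<in> set_pmf \<omega>"
    have "map_pmf (\<lambda>w. h (F w)) \<omega> = map_pmf h (map_pmf F \<omega>)" by (simp add: map_pmf_comp)
    then show "pmf (map_pmf (\<lambda>w. h (F w)) \<omega>) (h (F w)) = pmf (map_pmf F \<omega>) (F w)"
      using pmf_map_inj[of h "map_pmf F \<omega>" "F w"] I w by simp
  qed
  then show ?thesis unfolding ent_expect[OF fin] expect_sum[OF fin]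
    by (simp cong: sum.cong)
qed

lemma ent_markov:
  assumes fin: "finite (set_pmf \<omega>)" and M: "markov \<omega> P Q R"
  shows "ent \<omega> (\<lambda>w. (P w, Q w, R w)) + ent \<omega> Q = ent \<omega> (\<lambda>w. (P w, Q w)) + ent \<omega> (\<lambda>w. (Q w, R w))"
proof -
  have key: "log 2 (pmf (map_pmf (\<lambda>w. (P w, Q w, R w)) \<omega>) (P w, Q w, R w)) + log 2 (pmf (map_pmf Q \<omega>) (Q w))
     = log 2 (pmf (map_pmf (\<lambda>w. (P w, Q w)) \<omega>) (P w, Q w)) + log 2 (pmf (map_pmf (\<lambda>w. (Q w, R w)) \<omega>) (Q w, R w))"
    if w: "w \<in> set_pmf \<omega>" for w
  proof -
    have p1: "pmf (map_pmf (\<lambda>w. (P w, Q w, R w)) \<omega>) (P w, Q w, R w) > 0" using pmf_map_pos[OF w] .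
    have p2: "pmf (map_pmf Q \<omega>) (Q w) > 0" using pmf_map_pos[OF w] .
    have p3: "pmf (map_pmf (\<lambda>w. (P w, Q w)) \<omega>) (P w, Q w) > 0" using pmf_map_pos[OF w] .
    have p4: "pmf (map_pmf (\<lambda>w. (Q w, R w)) \<omega>) (Q w, R w) > 0" using pmf_map_pos[OF w] .
    have eq: "pmf (map_pmf (\<lambda>w. (P w, Q w, R w)) \<omega>) (P w, Q w, R w) * pmf (map_pmf Q \<omega>) (Q w)
      = pmf (map_pmf (\<lambda>w. (P w, Q w)) \<omega>) (P w, Q w) * pmf (map_pmf (\<lambda>w. (Q w, R w)) \<omega>) (Q w, R w)"
      using M unfolding markov_pmf by blast
    show ?thesis using arg_cong[OF eq, of "log 2"] p1 p2 p3 p4 by (simp add: log_mult)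
  qed
  let ?l1 = "\<lambda>w. log 2 (pmf (map_pmf (\<lambda>w. (P w, Q w, R w)) \<omega>) (P w, Q w, R w))"
  let ?l2 = "\<lambda>w. log 2 (pmf (map_pmf Q \<omega>) (Q w))"
  let ?l3 = "\<lambda>w. log 2 (pmf (map_pmf (\<lambda>w. (P w, Q w)) \<omega>) (P w, Q w))"
  let ?l4 = "\<lambda>w. log 2 (pmf (map_pmf (\<lambda>w. (Q w, R w)) \<omega>) (Q w, R w))"
  have S: "(\<Sum>w\<in>set_pmf \<omega>. (?l1 w + ?l2 w) * pmf \<omega> w) = (\<Sum>w\<in>set_pmf \<omega>. (?l3 w + ?l4 w) * pmf \<omega> w)"
    by (rule sum.cong) (simp_all add: key)
  show ?thesis unfolding ent_expect[OF fin] expect_sum[OF fin]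
    using S by (simp add: distrib_right sum.distrib)
qed

fun seqpmf :: "(nat \<Rightarrow> 'a pmf) \<Rightarrow> nat \<Rightarrow> 'a list pmf" where
  "seqpmf Q 0 = return_pmf []"
| "seqpmf Q (Suc n) = bind_pmf (seqpmf Q n) (\<lambda>l. map_pmf (\<lambda>r. l @ [r]) (Q n))"

lemma seqpmf_len: "l \<in> set_pmf (seqpmf Q n) \<Longrightarrow> length l = n"
  by (induction n arbitrary: l) auto

lemma seqpmf_finite: "(\<And>i. finite (set_pmf (Q i))) \<Longrightarrow> finite (set_pmf (seqpmf Q n))"
  by (induction n) auto

lemma seqpmf_nth: "i < n \<Longrightarrow> map_pmf (\<lambda>l. l ! i) (seqpmf Q n) = Q i"
proof (induction n)
  case 0 then show ?case by simp
next
  case (Suc n)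
  show ?case
  proof (cases "i < n")
    case True
    have "map_pmf (\<lambda>l. l ! i) (seqpmf Q (Suc n))
        = bind_pmf (seqpmf Q n) (\<lambda>l. map_pmf (\<lambda>r. (l @ [r]) ! i) (Q n))"
      by (simp add: map_bind_pmf map_pmf_comp)
    also have "\<dots> = bind_pmf (seqpmf Q n) (\<lambda>l. return_pmf (l ! i))"
      by (rule bind_pmf_cong) (auto simp: seqpmf_len True nth_append map_pmf_const)
    also have "\<dots> = map_pmf (\<lambda>l. l ! i) (seqpmf Q n)" by (simp add: map_pmf_def)
    finally show ?thesis using Suc True by simp
  next
    case False
    then have i: "i = n" using Suc by simp
    have "map_pmf (\<lambda>l. l ! i) (seqpmf Q (Suc n))
        = bind_pmf (seqpmf Q n) (\<lambda>l. map_pmf (\<lambda>r. (l @ [r]) ! i) (Q n))"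
      by (simp add: map_bind_pmf map_pmf_comp)
    also have "\<dots> = bind_pmf (seqpmf Q n) (\<lambda>l. Q n)"
      by (rule bind_pmf_cong) (auto simp: seqpmf_len i nth_append)
    finally show ?thesis using i by simp
  qed
qed

lemma ent_map_pmf: "ent (map_pmf h \<omega>) F = ent \<omega> (\<lambda>w. F (h w))"
  by (simp add: ent_def map_pmf_comp)

lemma cmi_map_pmf: "cmi (map_pmf h \<omega>) A B C = cmi \<omega> (\<lambda>w. A (h w)) (\<lambda>w. B (h w)) (\<lambda>w. C (h w))"
  by (simp add: cmi_def ent_map_pmf)

lemma dist_ok_map_pmf: "dist_ok (map_pmf h \<omega>) Xv Zv di k Di \<epsilon> = dist_ok \<omega> (\<lambda>w. Xv (h w)) (\<lambda>w. Zv (h w)) di k Di \<epsilon>"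
  by (simp add: dist_ok_def)

lemma ent_inj2:
  assumes fin: "finite (set_pmf \<omega>)" and I: "inj k"
  shows "ent \<omega> (\<lambda>w. k (F w)) = ent \<omega> F"
  using ent_inj[OF fin, of k F] I by (simp add: inj_on_def inj_def)

lemma cmi_drop:
  assumes fin: "finite (set_pmf \<omega>)" and I: "inj h"
    and M1: "markov \<omega> (\<lambda>w. (A w, B w)) Q R" and M2: "markov \<omega> A Q R"
  shows "cmi \<omega> B (\<lambda>w. h (Q w, R w)) A = cmi \<omega> B Q A"
proof -
  have e1: "ent \<omega> (\<lambda>w. (h (Q w, R w), A w)) = ent \<omega> (\<lambda>w. (A w, Q w, R w))"
    using ent_inj2[OF fin, of "\<lambda>(a, q, r). (h (q, r), a)" "\<lambda>w. (A w, Q w, R w)"] I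
    by (simp add: inj_def)
  have e2: "ent \<omega> (\<lambda>w. (Q w, A w)) = ent \<omega> (\<lambda>w. (A w, Q w))"
    using ent_inj2[OF fin, of "\<lambda>(a, q). (q, a)" "\<lambda>w. (A w, Q w)"]
    by (simp add: inj_def)
  have e3: "ent \<omega> (\<lambda>w. (B w, h (Q w, R w), A w)) = ent \<omega> (\<lambda>w. ((A w, B w), Q w, R w))"
    using ent_inj2[OF fin, of "\<lambda>((a, b), q, r). (b, h (q, r), a)" "\<lambda>w. ((A w, B w), Q w, R w)"] I
    by (simp add: inj_def)
  have e4: "ent \<omega> (\<lambda>w. (B w, Q w, A w)) = ent \<omega> (\<lambda>w. ((A w, B w), Q w))"
    using ent_inj2[OF fin, of "\<lambda>((a, b), q). (b, q, a)" "\<lambda>w. ((A w, B w), Q w)"]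
    by (simp add: inj_def)
  note k1 = ent_markov[OF fin M1]
  note k2 = ent_markov[OF fin M2]
  show ?thesis unfolding cmi_def e1 e2 e3 e4 using k1 k2 by simp
qed

lemma alg_cancel:
  fixes P T A J R :: real
  assumes "P > 0" "P * T = A * J" "R * P = J"
  shows "R * A = T"
proof -
  have "P * T = P * (R * A)" using assms(2,3) by (simp add: algebra_simps)
  then show ?thesis using assms(1) by simp
qed

lemma kernel_exists:
  fixes \<omega>1 :: "'w pmf" and Xi :: "'w \<Rightarrow> 'x" and Vi Ub Ua :: "'w \<Rightarrow> nat"
  assumes fin: "finite (set_pmf \<omega>1)"
    and EA: "map_pmf (\<lambda>w. (Xi w, Vi w, Ub w)) \<omega>1 = UA"
    and EY: "map_pmf (\<lambda>w. (Xi w, Vi w, Ua w)) \<omega>1 = UY"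
    and M: "markov \<omega>1 Xi (\<lambda>w. (Vi w, Ub w)) Ua"
  shows "\<exists>Rk :: nat \<times> nat \<Rightarrow> nat pmf. (\<forall>vu. finite (set_pmf (Rk vu))) \<and>
           map_pmf (\<lambda>(t, r). (fst t, fst (snd t), r)) (bind_pmf UA (\<lambda>t. map_pmf (Pair t) (Rk (snd t)))) = UY"
proof -
  define J where "J = map_pmf (\<lambda>w. ((Vi w, Ub w), Ua w)) \<omega>1"
  define Rk where "Rk = (\<lambda>vu. if vu \<in> fst ` set_pmf J then map_pmf snd (cond_pmf J {p. fst p = vu}) else return_pmf 0)"
  define W where "W = map_pmf (\<lambda>w. ((Xi w, Vi w, Ub w), Ua w)) \<omega>1"
  have JF: "map_pmf fst J = map_pmf (\<lambda>w. (Vi w, Ub w)) \<omega>1" unfolding J_def by (simp add: map_pmf_comp)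
  have "bind_pmf UA (\<lambda>t. map_pmf (Pair t) (Rk (snd t))) = W"
  proof (rule pmf_eqI)
    fix z :: "('x \<times> nat \<times> nat) \<times> nat"
    obtain x v u r where z: "z = ((x, v, u), r)" by (metis prod.collapse)
    show "pmf (bind_pmf UA (\<lambda>t. map_pmf (Pair t) (Rk (snd t)))) z = pmf W z"
    proof (cases "pmf UA (x, v, u) = 0")
      case True
      then have "(x, v, u) \<notin> set_pmf UA" by (simp add: pmf_eq_0_set_pmf)
      then have "z \<notin> set_pmf W" unfolding W_def z EA[symmetric] by auto
      then show ?thesis using True unfolding z by (simp add: pmf_bind_pair pmf_eq_0_set_pmf[symmetric])
    next
      case False
      then have "(x, v, u) \<in> set_pmf UA" by (simp add: pmf_eq_0_set_pmf)
      then obtain w0 where w0: "w0 \<in> set_pmf \<omega>1" "Xi w0 = x" "Vi w0 = v" "Ub w0 = u"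
        unfolding EA[symmetric] by auto
      have inJ: "(v, u) \<in> fst ` set_pmf J" unfolding J_def using w0 by force
      have ne: "set_pmf J \<inter> {p. fst p = (v, u)} \<noteq> {}" using inJ by auto
      have pos: "pmf (map_pmf (\<lambda>w. (Vi w, Ub w)) \<omega>1) (v, u) > 0"
        using pmf_map_pos[OF w0(1), of "\<lambda>w. (Vi w, Ub w)"] w0 by simp
      have injs: "inj_on snd (set_pmf (cond_pmf J {p. fst p = (v, u)}))"
        using ne by (auto simp: inj_on_def prod_eq_iff)
      have "pmf (Rk (v, u)) r = pmf (cond_pmf J {p. fst p = (v, u)}) ((v, u), r)"
      proof (cases "((v, u), r) \<in> set_pmf (cond_pmf J {p. fst p = (v, u)})")
        case True
        then show ?thesis using pmf_map_inj[OF injs True] inJ by (simp add: Rk_def)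
      next
        case False
        then have "r \<notin> set_pmf (map_pmf snd (cond_pmf J {p. fst p = (v, u)}))"
          using ne by (auto simp: prod_eq_iff)
        then have z1: "pmf (map_pmf snd (cond_pmf J {p. fst p = (v, u)})) r = 0"
          by (simp add: pmf_eq_0_set_pmf)
        have z2: "pmf (cond_pmf J {p. fst p = (v, u)}) ((v, u), r) = 0"
          using False by (simp add: pmf_eq_0_set_pmf)
        show ?thesis using z1 z2 inJ by (simp add: Rk_def)
      qed
      also have "\<dots> = pmf J ((v, u), r) / measure J {p. fst p = (v, u)}"
        using ne by (simp add: pmf_cond)
      also have "measure J {p. fst p = (v, u)} = pmf (map_pmf (\<lambda>w. (Vi w, Ub w)) \<omega>1) (v, u)"
        unfolding JF[symmetric] by (simp add: pmf_map vimage_def)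
      finally have R: "pmf (Rk (v, u)) r = pmf (map_pmf (\<lambda>w. ((Vi w, Ub w), Ua w)) \<omega>1) ((v, u), r)
            / pmf (map_pmf (\<lambda>w. (Vi w, Ub w)) \<omega>1) (v, u)"
        unfolding J_def .
      have MK: "pmf (map_pmf (\<lambda>w. ((Xi w, Vi w, Ub w), Ua w)) \<omega>1) ((x, v, u), r)
             * pmf (map_pmf (\<lambda>w. (Vi w, Ub w)) \<omega>1) (v, u)
          = pmf (map_pmf (\<lambda>w. (Xi w, Vi w, Ub w)) \<omega>1) (x, v, u)
             * pmf (map_pmf (\<lambda>w. ((Vi w, Ub w), Ua w)) \<omega>1) ((v, u), r)"
        using M[unfolded markov_pmf2] by auto
      have R': "pmf (Rk (v, u)) r * pmf (map_pmf (\<lambda>w. (Vi w, Ub w)) \<omega>1) (v, u)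
          = pmf (map_pmf (\<lambda>w. ((Vi w, Ub w), Ua w)) \<omega>1) ((v, u), r)"
        using R pos by (simp add: field_simps)
      have "pmf (Rk (v, u)) r * pmf (map_pmf (\<lambda>w. (Xi w, Vi w, Ub w)) \<omega>1) (x, v, u)
          = pmf (map_pmf (\<lambda>w. ((Xi w, Vi w, Ub w), Ua w)) \<omega>1) ((x, v, u), r)"
        by (rule alg_cancel[OF pos _ R']) (use MK in \<open>simp add: mult.commute\<close>)
      then show ?thesis unfolding z pmf_bind_pair W_def EA[symmetric] by (simp add: mult.commute)
    qed
  qed
  then have "map_pmf (\<lambda>(t, r). (fst t, fst (snd t), r)) (bind_pmf UA (\<lambda>t. map_pmf (Pair t) (Rk (snd t)))) = UY"
    unfolding W_def EY[symmetric] by (simp add: map_pmf_comp)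
  moreover have "\<forall>vu. finite (set_pmf (Rk vu))"
  proof
    fix vu
    have fJ: "finite (set_pmf J)" unfolding J_def using fin by simp
    show "finite (set_pmf (Rk vu))"
    proof (cases "vu \<in> fst ` set_pmf J")
      case True
      then have "set_pmf J \<inter> {p. fst p = vu} \<noteq> {}" by auto
      then have "set_pmf (cond_pmf J {p. fst p = vu}) \<subseteq> set_pmf J" by simp
      then have "finite (set_pmf (cond_pmf J {p. fst p = vu}))" using fJ finite_subset by blast
      then show ?thesis using True unfolding Rk_def by simp
    qed (simp add: Rk_def)
  qed
  ultimately show ?thesis by blast
qed

lemma dist_transfer:
  assumes E1: "map_pmf (\<lambda>w. (X3 w, V3 w, U3 w)) \<omega>3 = map_pmf (\<lambda>z. (X' z, V' z, R' z)) \<omega>'"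
    and E2: "map_pmf (\<lambda>w. (X3 w, Y3 w)) \<omega>3 = map_pmf (\<lambda>z. (X' z, Y' z)) \<omega>'"
    and M3: "markov \<omega>3 (\<lambda>w. (V3 w, U3 w)) X3 Y3"
    and M': "markov \<omega>' (\<lambda>z. (V' z, R' z)) X' Y'"
    and D: "dist_ok \<omega>3 X3 (\<lambda>w. g (V3 w) (U3 w) (Y3 w)) dd k Di \<epsilon>"
  shows "dist_ok \<omega>' X' (\<lambda>z. g (V' z) (R' z) (Y' z)) dd k Di \<epsilon>"
proof -
  have E1': "map_pmf (\<lambda>w. ((V3 w, U3 w), X3 w)) \<omega>3 = map_pmf (\<lambda>z. ((V' z, R' z), X' z)) \<omega>'"
    using arg_cong[OF E1, of "map_pmf (\<lambda>(x, v, u). ((v, u), x))"] by (simp add: map_pmf_comp)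
  have L: "map_pmf (\<lambda>w. (((V3 w, U3 w), X3 w), Y3 w)) \<omega>3 = map_pmf (\<lambda>z. (((V' z, R' z), X' z), Y' z)) \<omega>'"
    by (rule law_det[OF M3 M' E1' E2])
  have "\<And>j. measure_pmf.expectation \<omega>' (\<lambda>z. dd j (X' z) (g (V' z) (R' z) (Y' z)))
        = measure_pmf.expectation \<omega>3 (\<lambda>w. dd j (X3 w) (g (V3 w) (U3 w) (Y3 w)))"
  proof -
    fix j
    have "measure_pmf.expectation \<omega>' (\<lambda>z. dd j (X' z) (g (V' z) (R' z) (Y' z)))
      = measure_pmf.expectation (map_pmf (\<lambda>z. (((V' z, R' z), X' z), Y' z)) \<omega>') (\<lambda>(((v, r), x), y). dd j x (g v r y))"
      by simp
    also have "\<dots> = measure_pmf.expectation \<omega>3 (\<lambda>w. dd j (X3 w) (g (V3 w) (U3 w) (Y3 w)))"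
      unfolding L[symmetric] by simp
    finally show "measure_pmf.expectation \<omega>' (\<lambda>z. dd j (X' z) (g (V' z) (R' z) (Y' z)))
        = measure_pmf.expectation \<omega>3 (\<lambda>w. dd j (X3 w) (g (V3 w) (U3 w) (Y3 w)))" .
  qed
  then show ?thesis using D unfolding dist_ok_def by simp
qed

lemma mono_plus:
  fixes \<omega>0 :: "nat pmf" and X0 :: "nat \<Rightarrow> 'x::countable" and Y0 :: "nat \<Rightarrow> nat \<Rightarrow> nat"
    and m :: nat and d :: "nat \<Rightarrow> nat \<Rightarrow> 'x \<Rightarrow> 'r \<Rightarrow> real" and nc :: "nat \<Rightarrow> nat"
    and D :: "nat \<Rightarrow> nat \<Rightarrow> real" and \<epsilon> :: real
    and \<omega> :: "nat pmf" and Xv :: "nat \<Rightarrow> 'x" and Av Bv :: "nat \<Rightarrow> nat" and Yv :: "nat \<Rightarrow> nat \<Rightarrow> nat"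
  assumes fin0: "finite (set_pmf \<omega>0)"
    and UO: "U_ok \<omega>0 X0 Y0 m d nc D \<epsilon> Vg U"
    and VG: "inC (srcX \<omega>0 X0) Vg"
    and LP: "LP_feasible (srcX \<omega>0 X0) U K"
    and CP: "cpl (srcX \<omega>0 X0) \<omega> Xv"
    and AC: "inC (srcX \<omega>0 X0) (law \<omega> Xv Av)"
    and YE: "map_pmf (\<lambda>w. (Xv w, ysv m Yv w)) \<omega> = map_pmf (\<lambda>w. (X0 w, ysv m Y0 w)) \<omega>0"
    and MK: "markov \<omega> Av Bv Xv"
  shows "ereal (K (law \<omega> Xv Av)) \<ge> ereal (K (law \<omega> Xv Bv)) + Rrate m d nc D \<epsilon> \<omega> Xv Av Bv Yv"
proof -
  define UA where "UA = U (law \<omega> Xv Av)"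
  have UA1: "map_pmf (\<lambda>(x, v, u). (x, v)) UA = Vg" "finite (set_pmf UA)"
    using UO AC unfolding U_ok_def UA_def by blast+
  have finw: "finite (set_pmf \<omega>)" and mXw: "map_pmf Xv \<omega> = srcX \<omega>0 X0"
    using CP unfolding cpl_def by auto
  have UAfst: "map_pmf fst UA = srcX \<omega>0 X0"
  proof -
    have "map_pmf fst UA = map_pmf fst (map_pmf (\<lambda>(x, v, u). (x, v)) UA)"
      by (simp add: map_pmf_comp case_prod_beta)
    then show ?thesis using VG UA1 unfolding inC_def by simp
  qed
  define cU where "cU = (\<lambda>x. cond_pmf UA {t. fst t = x})"
  have setcU: "set_pmf (cU x) = set_pmf UA \<inter> {t. fst t = x}" if "x \<in> set_pmf (srcX \<omega>0 X0)" for x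
  proof -
    have "set_pmf UA \<inter> {t. fst t = x} \<noteq> {}" using that unfolding UAfst[symmetric] by auto
    then show ?thesis unfolding cU_def by simp
  qed
  have bindcU: "bind_pmf (srcX \<omega>0 X0) cU = UA"
    unfolding cU_def
  proof (rule bind_cond_pmf_cancel)
    show "\<And>x. x \<in> set_pmf (srcX \<omega>0 X0) \<Longrightarrow> set_pmf UA \<inter> {y. fst y = x} \<noteq> {}"
      unfolding UAfst[symmetric] by auto
    show "\<And>y. y \<in> set_pmf UA \<Longrightarrow> set_pmf (srcX \<omega>0 X0) \<inter> {x. fst y = x} \<noteq> {}"
      unfolding UAfst[symmetric] by auto
    show "\<And>x y. x \<in> set_pmf (srcX \<omega>0 X0) \<Longrightarrow> y \<in> set_pmf UA \<Longrightarrow> fst y = x \<Longrightarrow>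
          measure UA {y. fst y = x} = measure (srcX \<omega>0 X0) {x. fst y = x}"
      unfolding UAfst[symmetric] by (auto simp: vimage_def eq_commute)
  qed
  define \<omega>1 where "\<omega>1 = bind_pmf \<omega> (\<lambda>w. map_pmf (Pair w) (cU (Xv w)))"
  have XvS: "Xv w \<in> set_pmf (srcX \<omega>0 X0)" if "w \<in> set_pmf \<omega>" for w
    using that unfolding mXw[symmetric] by auto
  have set1: "fst a \<in> set_pmf \<omega> \<and> snd a \<in> set_pmf UA \<and> fst (snd a) = Xv (fst a)" if "a \<in> set_pmf \<omega>1" for a
    using that setcU XvS unfolding \<omega>1_def by auto
  have fin1: "finite (set_pmf \<omega>1)"
  proof -
    have "set_pmf \<omega>1 \<subseteq> set_pmf \<omega> \<times> set_pmf UA" using set1 by (auto simp: mem_Times_iff)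
    then show ?thesis using finw UA1(2) finite_subset by blast
  qed
  have map1fst: "map_pmf fst \<omega>1 = \<omega>" unfolding \<omega>1_def by (rule map_fst_bind_pair)
  have map1snd: "map_pmf snd \<omega>1 = UA"
  proof -
    have "map_pmf snd \<omega>1 = bind_pmf \<omega> (\<lambda>w. cU (Xv w))"
      unfolding \<omega>1_def by (simp add: map_bind_pmf map_pmf_comp)
    also have "\<dots> = bind_pmf (map_pmf Xv \<omega>) cU" by (simp add: bind_map_pmf)
    finally show ?thesis using mXw bindcU by simp
  qed
  have lawY: "law \<omega> Xv (Yv i) = Yg \<omega>0 X0 Y0 i" if "i < m" for i
  proof -
    have "law \<omega> Xv (Yv i) = map_pmf (\<lambda>(x, l). (x, l ! i)) (map_pmf (\<lambda>w. (Xv w, ysv m Yv w)) \<omega>)"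
      unfolding law_def using that by (simp add: map_pmf_comp ysv_def)
    also have "\<dots> = map_pmf (\<lambda>(x, l). (x, l ! i)) (map_pmf (\<lambda>w. (X0 w, ysv m Y0 w)) \<omega>0)"
      unfolding YE ..
    also have "\<dots> = Yg \<omega>0 X0 Y0 i"
      unfolding Yg_def law_def using that by (simp add: map_pmf_comp ysv_def)
    finally show ?thesis .
  qed
  have YC: "inC (srcX \<omega>0 X0) (Yg \<omega>0 X0 Y0 i)" for i
    unfolding inC_def Yg_def law_def srcX_def using fin0 by (simp add: map_pmf_comp)
  have "\<forall>i. \<exists>Rk :: nat \<times> nat \<Rightarrow> nat pmf. (\<forall>vu. finite (set_pmf (Rk vu))) \<and>
          ((i < m \<and> markov \<omega> (Yv i) Av Xv) \<longrightarrow>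
           map_pmf (\<lambda>(t, r). (fst t, fst (snd t), r)) (bind_pmf UA (\<lambda>t. map_pmf (Pair t) (Rk (snd t))))
             = U (Yg \<omega>0 X0 Y0 i))"
  proof
    fix i
    show "\<exists>Rk :: nat \<times> nat \<Rightarrow> nat pmf. (\<forall>vu. finite (set_pmf (Rk vu))) \<and>
          ((i < m \<and> markov \<omega> (Yv i) Av Xv) \<longrightarrow>
           map_pmf (\<lambda>(t, r). (fst t, fst (snd t), r)) (bind_pmf UA (\<lambda>t. map_pmf (Pair t) (Rk (snd t))))
             = U (Yg \<omega>0 X0 Y0 i))"
    proof (cases "i < m \<and> markov \<omega> (Yv i) Av Xv")
      case False
      then show ?thesis by (intro exI[of _ "\<lambda>_. return_pmf 0"]) auto
    next
      case True
      have U2: "\<forall>B As. inC (srcX \<omega>0 X0) B \<and> list_all (inC (srcX \<omega>0 X0)) As \<and>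
        (\<exists>(\<omega>::nat pmf) Xv Bv (Av::nat \<Rightarrow> nat \<Rightarrow> nat). cpl (srcX \<omega>0 X0) \<omega> Xv \<and> law \<omega> Xv Bv = B \<and>
            (\<forall>j<length As. law \<omega> Xv (Av j) = As ! j) \<and>
            markov \<omega> Xv Bv (\<lambda>w. map (\<lambda>j. Av j w) [0..<length As]))
      \<longrightarrow> (\<exists>(\<omega>::nat pmf) Xv (Vv::nat \<Rightarrow> nat) (Ub::nat \<Rightarrow> nat) (Ua::nat \<Rightarrow> nat \<Rightarrow> nat).
            finite (set_pmf \<omega>) \<and>
            map_pmf (\<lambda>w. (Xv w, Vv w, Ub w)) \<omega> = U B \<and>
            (\<forall>j<length As. map_pmf (\<lambda>w. (Xv w, Vv w, Ua j w)) \<omega> = U (As ! j)) \<and>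
            markov \<omega> Xv (\<lambda>w. (Vv w, Ub w)) (\<lambda>w. map (\<lambda>j. Ua j w) [0..<length As]))"
        using UO unfolding U_ok_def by blast
      have Mx: "markov \<omega> Xv Av (\<lambda>w. map (\<lambda>j. Yv i w) [0..<length [Yg \<omega>0 X0 Y0 i]])"
      proof -
        have "markov \<omega> Xv Av (Yv i)" using True markov_sym by blast
        then have "markov \<omega> Xv Av (\<lambda>w. (\<lambda>y. [y]) (Yv i w))"
          by (rule markov_inj_on) (auto simp: inj_on_def)
        then show ?thesis by simp
      qed
      have "\<exists>(\<omega>'::nat pmf) X' B' (A'::nat \<Rightarrow> nat \<Rightarrow> nat). cpl (srcX \<omega>0 X0) \<omega>' X' \<and> law \<omega>' X' B' = law \<omega> Xv Av \<and>
            (\<forall>j<length [Yg \<omega>0 X0 Y0 i]. law \<omega>' X' (A' j) = [Yg \<omega>0 X0 Y0 i] ! j) \<and>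
            markov \<omega>' X' B' (\<lambda>w. map (\<lambda>j. A' j w) [0..<length [Yg \<omega>0 X0 Y0 i]])"
        apply (rule exI[of _ \<omega>], rule exI[of _ Xv], rule exI[of _ Av], rule exI[of _ "\<lambda>j. Yv i"])
        using CP lawY True Mx by simp
      then have "inC (srcX \<omega>0 X0) (law \<omega> Xv Av) \<and> list_all (inC (srcX \<omega>0 X0)) [Yg \<omega>0 X0 Y0 i] \<and>
        (\<exists>(\<omega>'::nat pmf) X' B' (A'::nat \<Rightarrow> nat \<Rightarrow> nat). cpl (srcX \<omega>0 X0) \<omega>' X' \<and> law \<omega>' X' B' = law \<omega> Xv Av \<and>
            (\<forall>j<length [Yg \<omega>0 X0 Y0 i]. law \<omega>' X' (A' j) = [Yg \<omega>0 X0 Y0 i] ! j) \<and>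
            markov \<omega>' X' B' (\<lambda>w. map (\<lambda>j. A' j w) [0..<length [Yg \<omega>0 X0 Y0 i]]))"
        using AC YC by simp
      then have "\<exists>(\<omega>''::nat pmf) X'' (Vv::nat \<Rightarrow> nat) (Ub::nat \<Rightarrow> nat) (Ua::nat \<Rightarrow> nat \<Rightarrow> nat).
            finite (set_pmf \<omega>'') \<and>
            map_pmf (\<lambda>w. (X'' w, Vv w, Ub w)) \<omega>'' = U (law \<omega> Xv Av) \<and>
            (\<forall>j<length [Yg \<omega>0 X0 Y0 i]. map_pmf (\<lambda>w. (X'' w, Vv w, Ua j w)) \<omega>'' = U ([Yg \<omega>0 X0 Y0 i] ! j)) \<and>
            markov \<omega>'' X'' (\<lambda>w. (Vv w, Ub w)) (\<lambda>w. map (\<lambda>j. Ua j w) [0..<length [Yg \<omega>0 X0 Y0 i]])"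
        by (rule U2[rule_format])
      then obtain \<omega>i :: "nat pmf" and Xi Vi Ub Ua where Oi: "finite (set_pmf \<omega>i)"
        "map_pmf (\<lambda>w. (Xi w, Vi w, Ub w)) \<omega>i = U (law \<omega> Xv Av)"
        "\<forall>j<length [Yg \<omega>0 X0 Y0 i]. map_pmf (\<lambda>w. (Xi w, Vi w, Ua j w)) \<omega>i = U ([Yg \<omega>0 X0 Y0 i] ! j)"
        "markov \<omega>i Xi (\<lambda>w. (Vi w, Ub w)) (\<lambda>w. map (\<lambda>j. Ua j w) [0..<length [Yg \<omega>0 X0 Y0 i]])"
        by blast
      have Mi: "markov \<omega>i Xi (\<lambda>w. (Vi w, Ub w)) (Ua 0)"
      proof -
        have "markov \<omega>i Xi (\<lambda>w. (Vi w, Ub w)) (\<lambda>w. hd ((\<lambda>w. [Ua 0 w]) w))"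
          by (rule markov_inj_on) (use Oi(4) in \<open>auto simp: inj_on_def\<close>)
        then show ?thesis by simp
      qed
      obtain Rk :: "nat \<times> nat \<Rightarrow> nat pmf" where "(\<forall>vu. finite (set_pmf (Rk vu)))"
        "map_pmf (\<lambda>(t, r). (fst t, fst (snd t), r)) (bind_pmf UA (\<lambda>t. map_pmf (Pair t) (Rk (snd t))))
             = U (Yg \<omega>0 X0 Y0 i)"
        using kernel_exists[OF Oi(1) Oi(2)[folded UA_def] _ Mi] Oi(3) by auto
      then show ?thesis by blast
    qed
  qed
  then have "\<exists>Rk. \<forall>i. (\<forall>vu. finite (set_pmf (Rk i vu))) \<and>
          ((i < m \<and> markov \<omega> (Yv i) Av Xv) \<longrightarrow>
           map_pmf (\<lambda>(t, r). (fst t, fst (snd t), r)) (bind_pmf UA (\<lambda>t. map_pmf (Pair t) (Rk i (snd t))))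
             = U (Yg \<omega>0 X0 Y0 i))"
    by (rule choice)
  then obtain Rk :: "nat \<Rightarrow> nat \<times> nat \<Rightarrow> nat pmf" where RKall: "\<forall>i. (\<forall>vu. finite (set_pmf (Rk i vu))) \<and>
          ((i < m \<and> markov \<omega> (Yv i) Av Xv) \<longrightarrow>
           map_pmf (\<lambda>(t, r). (fst t, fst (snd t), r)) (bind_pmf UA (\<lambda>t. map_pmf (Pair t) (Rk i (snd t))))
             = U (Yg \<omega>0 X0 Y0 i))"
    by blast
  have RKf: "\<And>i vu. finite (set_pmf (Rk i vu))" using RKall by blast
  have RKl: "\<And>i. i < m \<Longrightarrow> markov \<omega> (Yv i) Av Xv \<Longrightarrow>
           map_pmf (\<lambda>(t, r). (fst t, fst (snd t), r)) (bind_pmf UA (\<lambda>t. map_pmf (Pair t) (Rk i (snd t))))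
             = U (Yg \<omega>0 X0 Y0 i)"
    using RKall by blast
  define RK where "RK = (\<lambda>vu. seqpmf (\<lambda>i. Rk i vu) m)"
  define \<omega>2 where "\<omega>2 = bind_pmf \<omega>1 (\<lambda>a. map_pmf (Pair a) (RK (snd (snd a))))"
  have map2fst: "map_pmf fst \<omega>2 = \<omega>1" unfolding \<omega>2_def by (rule map_fst_bind_pair)
  have fin2: "finite (set_pmf \<omega>2)"
    unfolding \<omega>2_def using fin1 by (simp add: RK_def seqpmf_finite RKf)
  define Q where "Q = (\<lambda>x. bind_pmf (cU x) (\<lambda>t. map_pmf (Pair t) (RK (snd t))))"
  define \<Omega> where "\<Omega> = bind_pmf \<omega> (\<lambda>w. map_pmf (Pair w) (Q (Xv w)))"
  have alt: "\<omega>2 = map_pmf (\<lambda>z. ((fst z, fst (snd z)), snd (snd z))) \<Omega>"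
    unfolding \<omega>2_def \<omega>1_def \<Omega>_def Q_def map_pmf_def by (simp add: bind_assoc_pmf bind_return_pmf)
  have MX: "markov \<omega>2 (\<lambda>e. G (snd (fst e), snd e)) (\<lambda>e. Xv (fst (fst e))) (\<lambda>e. H (fst (fst e)))" for G H
  proof -
    have "markov \<Omega> (\<lambda>z. H (fst z)) (\<lambda>z. Xv (fst z)) (\<lambda>z. G (snd z))" by (rule markov_kernel[where K=Q and f=Xv, OF \<Omega>_def])
    then have "markov \<Omega> (\<lambda>z. G (snd z)) (\<lambda>z. Xv (fst z)) (\<lambda>z. H (fst z))" by (rule markov_sym)
    then show ?thesis unfolding alt markov_map by simp
  qed
  have MR: "markov \<omega>2 (\<lambda>e. H (fst e)) (\<lambda>e. snd (snd (fst e))) (\<lambda>e. snd e)" for H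
    using markov_kernel[where K=RK and f="\<lambda>a. snd (snd a)" and H=H and G="\<lambda>x. x", OF \<omega>2_def] by simp
  have Lw: "map_pmf (\<lambda>e. F (fst (fst e))) \<omega>2 = map_pmf F \<omega>" for F :: "nat \<Rightarrow> 'b"
    using arg_cong[OF arg_cong[OF map2fst, of "map_pmf fst"], of "map_pmf F"] map1fst
    by (simp add: map_pmf_comp)
  have LU: "map_pmf (\<lambda>e. (Xv (fst (fst e)), fst (snd (snd (fst e))), snd (snd (snd (fst e))))) \<omega>2 = UA"
  proof -
    have "map_pmf (\<lambda>e. (Xv (fst (fst e)), fst (snd (snd (fst e))), snd (snd (snd (fst e))))) \<omega>2
        = map_pmf (\<lambda>a. (Xv (fst a), fst (snd (snd a)), snd (snd (snd a)))) \<omega>1"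
      unfolding map2fst[symmetric] by (simp add: map_pmf_comp)
    also have "\<dots> = map_pmf snd \<omega>1"
      by (rule map_pmf_cong) (auto dest!: set1 simp: prod_eq_iff)
    finally show ?thesis using map1snd by simp
  qed
  have LR: "map_pmf (\<lambda>e. (Xv (fst (fst e)), fst (snd (snd (fst e))), snd e ! i)) \<omega>2 = U (Yg \<omega>0 X0 Y0 i)"
    if i: "i < m" "markov \<omega> (Yv i) Av Xv" for i
  proof -
    have "map_pmf (\<lambda>e. (Xv (fst (fst e)), fst (snd (snd (fst e))), snd e ! i)) \<omega>2
       = bind_pmf \<omega>1 (\<lambda>a. map_pmf (\<lambda>rs. (Xv (fst a), fst (snd (snd a)), rs ! i)) (RK (snd (snd a))))"
      unfolding \<omega>2_def by (simp add: map_bind_pmf map_pmf_comp)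
    also have "\<dots> = bind_pmf \<omega>1 (\<lambda>a. map_pmf (\<lambda>r. (fst (snd a), fst (snd (snd a)), r)) (Rk i (snd (snd a))))"
    proof (rule bind_pmf_cong)
      fix a assume a: "a \<in> set_pmf \<omega>1"
      have "map_pmf (\<lambda>rs. (Xv (fst a), fst (snd (snd a)), rs ! i)) (RK (snd (snd a)))
          = map_pmf (\<lambda>r. (Xv (fst a), fst (snd (snd a)), r)) (map_pmf (\<lambda>l. l ! i) (RK (snd (snd a))))"
        by (simp add: map_pmf_comp)
      also have "\<dots> = map_pmf (\<lambda>r. (fst (snd a), fst (snd (snd a)), r)) (Rk i (snd (snd a)))"
        unfolding RK_def seqpmf_nth[OF i(1)] using set1[OF a] by simp
      finally show "map_pmf (\<lambda>rs. (Xv (fst a), fst (snd (snd a)), rs ! i)) (RK (snd (snd a)))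
          = map_pmf (\<lambda>r. (fst (snd a), fst (snd (snd a)), r)) (Rk i (snd (snd a)))" .
    qed simp
    also have "\<dots> = bind_pmf (map_pmf snd \<omega>1) (\<lambda>t. map_pmf (\<lambda>r. (fst t, fst (snd t), r)) (Rk i (snd t)))"
      by (simp add: bind_map_pmf)
    also have "\<dots> = map_pmf (\<lambda>(t, r). (fst t, fst (snd t), r)) (bind_pmf UA (\<lambda>t. map_pmf (Pair t) (Rk i (snd t))))"
      unfolding map1snd by (simp add: map_bind_pmf map_pmf_comp)
    also have "\<dots> = U (Yg \<omega>0 X0 Y0 i)" by (rule RKl[OF i])
    finally show ?thesis .
  qed
  define fr :: "nat \<Rightarrow> (nat \<times> ('x \<times> nat \<times> nat)) \<times> nat list" where "fr = from_nat"
  have frto: "fr (to_nat e) = e" for e unfolding fr_def by simp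
  define \<omega>N where "\<omega>N = map_pmf to_nat \<omega>2"
  define XN where "XN = (\<lambda>z. Xv (fst (fst (fr z))))"
  define AN where "AN = (\<lambda>z. Av (fst (fst (fr z))))"
  define BN where "BN = (\<lambda>z. Bv (fst (fst (fr z))))"
  define YN where "YN = (\<lambda>i z. Yv i (fst (fst (fr z))))"
  define VN where "VN = (\<lambda>z. fst (snd (snd (fst (fr z)))))"
  define UQ where "UQ = (\<lambda>z. snd (snd (snd (fst (fr z)))))"
  define V2N :: "nat \<Rightarrow> nat" where "V2N = (\<lambda>z. to_nat (snd (snd (fst (fr z))), snd (fr z)))"
  have finN: "finite (set_pmf \<omega>N)" unfolding \<omega>N_def using fin2 by simp
  have cplN: "cpl (srcX \<omega>0 X0) \<omega>N XN"
    unfolding cpl_def using finN Lw[of Xv] mXw by (simp add: \<omega>N_def XN_def map_pmf_comp frto)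
  have lawA: "law \<omega>N XN AN = law \<omega> Xv Av"
    unfolding law_def using Lw[of "\<lambda>w. (Xv w, Av w)"] by (simp add: \<omega>N_def XN_def AN_def map_pmf_comp frto)
  have lawB: "law \<omega>N XN BN = law \<omega> Xv Bv"
    unfolding law_def using Lw[of "\<lambda>w. (Xv w, Bv w)"] by (simp add: \<omega>N_def XN_def BN_def map_pmf_comp frto)
  have UNeq: "map_pmf (\<lambda>z. (XN z, VN z, UQ z)) \<omega>N = U (law \<omega>N XN AN)"
    unfolding lawA UA_def[symmetric] LU[symmetric] by (simp add: \<omega>N_def XN_def VN_def UQ_def map_pmf_comp frto)
  have Mw: "markov \<omega>2 (\<lambda>e. F1 (fst (fst e))) (\<lambda>e. F2 (fst (fst e))) (\<lambda>e. F3 (fst (fst e)))"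
    if "markov \<omega> F1 F2 F3" for F1 F2 F3 :: "nat \<Rightarrow> 'b"
  proof -
    have "map_pmf (\<lambda>e. fst (fst e)) \<omega>2 = \<omega>" using Lw[of "\<lambda>x. x"] by simp
    then show ?thesis using that markov_map[of "\<lambda>e. fst (fst e)" \<omega>2 F1 F2 F3] by simp
  qed
  have MKN: "markov \<omega>N AN BN XN"
  proof -
    have "markov \<omega>2 (\<lambda>e. Av (fst (fst e))) (\<lambda>e. Bv (fst (fst e))) (\<lambda>e. Xv (fst (fst e)))"
      using markov_map[of "\<lambda>e. fst (fst e)" \<omega>2 Av Bv Xv] Lw[of "\<lambda>x. x"] MK by simp
    then show ?thesis unfolding \<omega>N_def markov_map by (simp add: AN_def BN_def XN_def frto)
  qed
  have M1N: "markov \<omega>N (\<lambda>z. (UQ z, VN z)) XN (\<lambda>z. (AN z, BN z))"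
    using MX[of "\<lambda>(t, rs). (snd (snd t), fst (snd t))" "\<lambda>w. (Av w, Bv w)"]
    unfolding \<omega>N_def markov_map by (simp add: AN_def BN_def XN_def UQ_def VN_def frto)
  have LP5: "\<forall>\<omega> Xv Av Bv (Vv::nat \<Rightarrow> nat) (Uv::nat \<Rightarrow> nat).
        cpl (srcX \<omega>0 X0) \<omega> Xv \<and> map_pmf (\<lambda>w. (Xv w, Vv w, Uv w)) \<omega> = U (law \<omega> Xv Av) \<and>
        markov \<omega> Av Bv Xv \<and> markov \<omega> (\<lambda>w. (Uv w, Vv w)) Xv (\<lambda>w. (Av w, Bv w))
        \<longrightarrow> K (law \<omega> Xv Av) \<ge> K (law \<omega> Xv Bv) + cmi \<omega> Bv (\<lambda>w. (Vv w, Uv w)) Av"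
    using LP unfolding LP_feasible_def by blast
  have LPi: "K (law \<omega>N XN AN) \<ge> K (law \<omega>N XN BN) + cmi \<omega>N BN (\<lambda>z. (VN z, UQ z)) AN"
    using LP5 cplN UNeq MKN M1N by blast
  have cmieq: "cmi \<omega>N BN V2N AN = cmi \<omega>N BN (\<lambda>z. (VN z, UQ z)) AN"
  proof -
    have "cmi \<omega>2 (\<lambda>e. Bv (fst (fst e))) (\<lambda>e. to_nat (snd (snd (fst e)), snd e)) (\<lambda>e. Av (fst (fst e)))
        = cmi \<omega>2 (\<lambda>e. Bv (fst (fst e))) (\<lambda>e. snd (snd (fst e))) (\<lambda>e. Av (fst (fst e)))"
      by (rule cmi_drop[OF fin2 inj_to_nat MR MR])
    then show ?thesis unfolding \<omega>N_def cmi_map_pmf by (simp add: AN_def BN_def V2N_def UQ_def VN_def frto)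
  qed
  have C2: "map_pmf (\<lambda>w. (XN w, AN w, BN w, ysv m YN w)) \<omega>N = map_pmf (\<lambda>w. (Xv w, Av w, Bv w, ysv m Yv w)) \<omega>"
    using Lw[of "\<lambda>w. (Xv w, Av w, Bv w, ysv m Yv w)"]
    by (simp add: \<omega>N_def XN_def AN_def BN_def YN_def map_pmf_comp frto ysv_def)
  have C3: "markov \<omega>N V2N XN (\<lambda>w. (AN w, BN w, ysv m YN w))"
    using MX[of "\<lambda>(t, rs). to_nat (snd t, rs)" "\<lambda>w. (Av w, Bv w, ysv m Yv w)"]
    unfolding \<omega>N_def markov_map by (simp add: AN_def BN_def XN_def YN_def V2N_def frto ysv_def)
  have U4: "\<forall>i<m. \<exists>(g::nat \<Rightarrow> nat \<Rightarrow> nat \<Rightarrow> 'r) (\<omega>::nat pmf) Xv (Vv::nat \<Rightarrow> nat) (Uv::nat \<Rightarrow> nat) Yv.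
          finite (set_pmf \<omega>) \<and>
          map_pmf (\<lambda>w. (Xv w, Vv w, Uv w)) \<omega> = U (Yg \<omega>0 X0 Y0 i) \<and>
          law \<omega> Xv Yv = Yg \<omega>0 X0 Y0 i \<and>
          markov \<omega> (\<lambda>w. (Vv w, Uv w)) Xv Yv \<and>
          dist_ok \<omega> Xv (\<lambda>w. g (Vv w) (Uv w) (Yv w)) (d i) (nc i) (D i) \<epsilon>"
    using UO unfolding U_ok_def by blast
  have C4: "\<forall>i<m. markov \<omega> (Yv i) Av Xv \<longrightarrow>
      (\<exists>g::nat \<Rightarrow> nat \<Rightarrow> 'r. dist_ok \<omega>N XN (\<lambda>w. g (V2N w) (YN i w)) (d i) (nc i) (D i) \<epsilon>)"
  proof (intro allI impI)
    fix i assume i: "i < m" "markov \<omega> (Yv i) Av Xv"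
    obtain g :: "nat \<Rightarrow> nat \<Rightarrow> nat \<Rightarrow> 'r" and \<omega>3 :: "nat pmf" and X3 V3 U3 Y3 where O3:
       "map_pmf (\<lambda>w. (X3 w, V3 w, U3 w)) \<omega>3 = U (Yg \<omega>0 X0 Y0 i)"
       "law \<omega>3 X3 Y3 = Yg \<omega>0 X0 Y0 i"
       "markov \<omega>3 (\<lambda>w. (V3 w, U3 w)) X3 Y3"
       "dist_ok \<omega>3 X3 (\<lambda>w. g (V3 w) (U3 w) (Y3 w)) (d i) (nc i) (D i) \<epsilon>"
      using U4 i(1) by blast
    define g' :: "nat \<Rightarrow> nat \<Rightarrow> 'r" where
      "g' = (\<lambda>z y. g (fst (fst (from_nat z :: (nat \<times> nat) \<times> nat list))) (snd (from_nat z :: (nat \<times> nat) \<times> nat list) ! i) y)"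
    have E1: "map_pmf (\<lambda>e. (Xv (fst (fst e)), fst (snd (snd (fst e))), snd e ! i)) \<omega>2
        = map_pmf (\<lambda>w. (X3 w, V3 w, U3 w)) \<omega>3"
      using O3(1) LR[OF i] by simp
    have E2: "map_pmf (\<lambda>e. (Xv (fst (fst e)), Yv i (fst (fst e)))) \<omega>2 = map_pmf (\<lambda>w. (X3 w, Y3 w)) \<omega>3"
      using O3(2) lawY[OF i(1)] Lw[of "\<lambda>w. (Xv w, Yv i w)"] unfolding law_def by simp
    have M': "markov \<omega>2 (\<lambda>e. (fst (snd (snd (fst e))), snd e ! i)) (\<lambda>e. Xv (fst (fst e))) (\<lambda>e. Yv i (fst (fst e)))"
      using MX[of "\<lambda>(t, rs). (fst (snd t), rs ! i)" "Yv i"] by simp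
    define RN where "RN = (\<lambda>z. snd (fr z) ! i)"
    have "dist_ok \<omega>N XN (\<lambda>z. g (VN z) (RN z) (YN i z)) (d i) (nc i) (D i) \<epsilon>"
    proof (rule dist_transfer[OF _ _ O3(3) _ O3(4)])
      show "map_pmf (\<lambda>w. (X3 w, V3 w, U3 w)) \<omega>3 = map_pmf (\<lambda>z. (XN z, VN z, RN z)) \<omega>N"
        using E1 by (simp add: \<omega>N_def XN_def VN_def RN_def map_pmf_comp frto)
      show "map_pmf (\<lambda>w. (X3 w, Y3 w)) \<omega>3 = map_pmf (\<lambda>z. (XN z, YN i z)) \<omega>N"
        using E2 by (simp add: \<omega>N_def XN_def YN_def map_pmf_comp frto)
      show "markov \<omega>N (\<lambda>z. (VN z, RN z)) XN (YN i)"
        using M' unfolding \<omega>N_def markov_map by (simp add: XN_def VN_def RN_def YN_def frto)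
    qed
    moreover have "(\<lambda>z. g (VN z) (RN z) (YN i z)) = (\<lambda>w. g' (V2N w) (YN i w))"
      by (simp add: g'_def V2N_def VN_def RN_def)
    ultimately have "dist_ok \<omega>N XN (\<lambda>w. g' (V2N w) (YN i w)) (d i) (nc i) (D i) \<epsilon>" by simp
    then show "\<exists>g::nat \<Rightarrow> nat \<Rightarrow> 'r. dist_ok \<omega>N XN (\<lambda>w. g (V2N w) (YN i w)) (d i) (nc i) (D i) \<epsilon>" by blast
  qed
  have RR: "Rrate m d nc D \<epsilon> \<omega> Xv Av Bv Yv \<le> ereal (cmi \<omega>N BN V2N AN)"
    unfolding Rrate_def
    by (rule Inf_lower) (use finN C2 C3 C4 in blast)
  have "ereal (K (law \<omega> Xv Bv)) + Rrate m d nc D \<epsilon> \<omega> Xv Av Bv Yv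
      \<le> ereal (K (law \<omega> Xv Bv)) + ereal (cmi \<omega>N BN V2N AN)"
    by (rule add_left_mono[OF RR])
  also have "\<dots> \<le> ereal (K (law \<omega> Xv Av))"
    using LPi cmieq lawA lawB by simp
  finally show ?thesis .
qed

theorem theorem4:
  fixes \<omega>0 :: "nat pmf" and X0 :: "nat \<Rightarrow> 'x::countable" and Y0 :: "nat \<Rightarrow> nat \<Rightarrow> nat"
    and m :: nat and d :: "nat \<Rightarrow> nat \<Rightarrow> 'x \<Rightarrow> 'r \<Rightarrow> real" and nc :: "nat \<Rightarrow> nat"
    and D :: "nat \<Rightarrow> nat \<Rightarrow> real" and S :: "'x gsi set" and \<epsilon> :: real
  assumes "finite (set_pmf \<omega>0)"
    and "finite S"
    and "\<forall>A\<in>S. inC (srcX \<omega>0 X0) A"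
    and "empty_gsi (srcX \<omega>0 X0) \<in> S"
    and "\<epsilon> > 0"
  shows "R_lb \<omega>0 X0 Y0 m d nc D \<epsilon> \<ge> Rp_lb \<omega>0 X0 Y0 m d nc D \<epsilon> S"
proof -
  have feas: "Rp_feasible \<omega>0 X0 Y0 m d nc D \<epsilon> S K"
    if UO: "U_ok \<omega>0 X0 Y0 m d nc D \<epsilon> Vg U" and VG: "inC (srcX \<omega>0 X0) Vg"
      and LP: "LP_feasible (srcX \<omega>0 X0) U K" for Vg U K
  proof -
    have SC: "\<And>A. A \<in> S \<Longrightarrow> inC (srcX \<omega>0 X0) A" using assms(3) by blast
    note LPd = LP[unfolded LP_feasible_def]
    have P1: "\<forall>P\<in>S. \<forall>Q\<in>S. det_gsi (srcX \<omega>0 X0) P \<and> det_gsi (srcX \<omega>0 X0) Q \<longrightarrow> K P = K Q"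
      using conjunct1[OF LPd] SC by blast
    have P2: "K (X_gsi (srcX \<omega>0 X0)) = 0" using conjunct1[OF conjunct2[OF LPd]] by blast
    have P3: "\<forall>A\<in>S. K A \<ge> 0" using conjunct1[OF conjunct2[OF conjunct2[OF LPd]]] SC by blast
    have P4: "\<forall>\<omega> Xv Av Bv Cv. cpl (srcX \<omega>0 X0) \<omega> Xv \<and> succeq \<omega> Xv Bv Av Cv
        \<longrightarrow> K (law \<omega> Xv (pairv Av Cv)) \<ge> K (law \<omega> Xv (pairv Bv Cv))"
      using conjunct1[OF conjunct2[OF conjunct2[OF conjunct2[OF conjunct2[OF LPd]]]]] by blast
    have P6: "\<forall>\<omega> Xv Av Bv Cv. cpl (srcX \<omega>0 X0) \<omega> Xv \<and> markov \<omega> Bv Cv Av \<and>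
        ((\<exists>f1. \<forall>w\<in>set_pmf \<omega>. Cv w = f1 (Av w)) \<or> (\<exists>f2. \<forall>w\<in>set_pmf \<omega>. Cv w = f2 (Bv w)))
        \<longrightarrow> K (law \<omega> Xv Av) + K (law \<omega> Xv Bv) \<ge> K (law \<omega> Xv Cv) + K (law \<omega> Xv (pairv Av Bv))"
      using conjunct2[OF conjunct2[OF conjunct2[OF conjunct2[OF conjunct2[OF conjunct2[OF LPd]]]]]] by blast
    have P5: "ereal (K (law \<omega> Xv Av)) \<ge> ereal (K (law \<omega> Xv Bv)) + Rrate m d nc D \<epsilon> \<omega> Xv Av Bv Yv"
      if "cpl (srcX \<omega>0 X0) \<omega> Xv" "law \<omega> Xv Av \<in> S"
        "map_pmf (\<lambda>w. (Xv w, ysv m Yv w)) \<omega> = map_pmf (\<lambda>w. (X0 w, ysv m Y0 w)) \<omega>0"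
        "markov \<omega> Av Bv Xv" for \<omega> Xv Av Bv Yv
      by (rule mono_plus[OF assms(1) UO VG LP that(1) SC[OF that(2)] that(3) that(4)])
    show ?thesis unfolding Rp_feasible_def Let_def
    proof (intro conjI)
      show "\<forall>\<omega> Xv Av Bv Yv. cpl (srcX \<omega>0 X0) \<omega> Xv \<and> law \<omega> Xv Av \<in> S \<and> law \<omega> Xv Bv \<in> S \<and>
        map_pmf (\<lambda>w. (Xv w, ysv m Yv w)) \<omega> = map_pmf (\<lambda>w. (X0 w, ysv m Y0 w)) \<omega>0 \<and>
        markov \<omega> Av Bv Xv
        \<longrightarrow> ereal (K (law \<omega> Xv Av)) \<ge> ereal (K (law \<omega> Xv Bv)) + Rrate m d nc D \<epsilon> \<omega> Xv Av Bv Yv"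
        using P5 by blast
    qed (use P1 P2 P3 P4 P6 in blast)+
  qed
  show ?thesis
    unfolding R_lb_def
  proof (rule Inf_greatest)
    fix x assume "x \<in> {Inf {R_LP (srcX \<omega>0 X0) \<epsilon> U | U. U_ok \<omega>0 X0 Y0 m d nc D \<epsilon> Vg U}
          | Vg. inC (srcX \<omega>0 X0) Vg}"
    then obtain Vg where x: "x = Inf {R_LP (srcX \<omega>0 X0) \<epsilon> U | U. U_ok \<omega>0 X0 Y0 m d nc D \<epsilon> Vg U}"
      and VG: "inC (srcX \<omega>0 X0) Vg" by blast
    show "Rp_lb \<omega>0 X0 Y0 m d nc D \<epsilon> S \<le> x"
      unfolding x
    proof (rule Inf_greatest)
      fix y assume "y \<in> {R_LP (srcX \<omega>0 X0) \<epsilon> U | U. U_ok \<omega>0 X0 Y0 m d nc D \<epsilon> Vg U}"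
      then obtain U where y: "y = R_LP (srcX \<omega>0 X0) \<epsilon> U" and UO: "U_ok \<omega>0 X0 Y0 m d nc D \<epsilon> Vg U"
        by blast
      show "Rp_lb \<omega>0 X0 Y0 m d nc D \<epsilon> S \<le> y"
        unfolding y R_LP_def
      proof (rule Inf_greatest)
        fix z assume "z \<in> {ereal (K (empty_gsi (srcX \<omega>0 X0)) - \<epsilon>) | K. LP_feasible (srcX \<omega>0 X0) U K}"
        then obtain K where z: "z = ereal (K (empty_gsi (srcX \<omega>0 X0)) - \<epsilon>)"
          and LP: "LP_feasible (srcX \<omega>0 X0) U K" by blast
        show "Rp_lb \<omega>0 X0 Y0 m d nc D \<epsilon> S \<le> z"
          unfolding z Rp_lb_def
          by (rule Inf_lower) (use feas[OF UO VG LP] in blast)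
      qed
    qed
  qed
qed

end
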